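(* Let $X=\mathbb{R}/\mathbb{Z}$ with its standard metric, $\mu_1=\mu_2$ Lebesgue measure, $(X,T_1,\mu_1)$ exponentially mixing for $BV$ against $L^\infty$, and $T_2(x)=x+\alpha\bmod 1$. Suppose there are a constant $c(\alpha)>0$ and a function $\varphi:\mathbb{N}\to(0,\infty)$ with $\varphi(q)\to\infty$ such that \[ |q\alpha-p|\ge c(\alpha)\,\frac{(\log q)\,\varphi(q)}{q^2} \] for all $p\in\mathbb{Z}$ and all sufficiently large $q\in\mathbb{N}$. Let $(r_n)_n$ be a sequence of positive numbers with $r_n\ge\frac{(\log n)h(n)}{n^2}$ for some function $h$ with $h(n)\to\infty$ and $h(n)/\varphi(n)\to0$ as $n\to\infty$. Then $(\mu_1\times\mu_2)(\limsup_n E_{n,r_n}^{T_1,T_2})=1$.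
   Context: $(X,T,\mu)$ is exponentially mixing for $BV$ against $L^\infty$ if there are $C,\theta>0$ such that for all $\psi$ of bounded variation, all $\varphi\in L^\infty(\mu)$ and all $n\ge0$, $\bigl|\int\psi\cdot\varphi\circ T^n\,d\mu-\int\psi\,d\mu\int\varphi\,d\mu\bigr|\le C\|\psi\|_{BV}\|\varphi\|_{L^\infty}e^{-\theta n}$. For $n\in\mathbb{N}$ and $r>0$, $E_{n,r}^{T_1,T_2}:=\{(x,y)\in X\times X : d(T_1^i x, T_2^j y)<r \text{ for some } 0\le i,j<n\}$; $E_{n,r_n}^{T_1,T_2}$ denotes this set with $r=r_n$. *)

theory Defs
  imports "HOL-Analysis.Analysis" "HOL-Probability.Essential_Supremum"
begin

text \<open>The circle X = R/Z is represented by the fundamental domain [0,1), with the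
  quotient (arc-length) metric and Lebesgue measure.\<close>

definition circ_dist :: "real \<Rightarrow> real \<Rightarrow> real" where
  "circ_dist x y = \<bar>x - y - of_int (round (x - y))\<bar>"

definition circle_measure :: "real measure" where
  "circle_measure = restrict_space lborel {0..<1}"

definition rot :: "real \<Rightarrow> real \<Rightarrow> real" where
  "rot \<alpha> x = frac (x + \<alpha>)"

definition measure_preserving_map :: "'a measure \<Rightarrow> ('a \<Rightarrow> 'a) \<Rightarrow> bool" where
  "measure_preserving_map M T \<longleftrightarrow> T \<in> measurable M M \<and> distr M M T = M"

definition total_var :: "(real \<Rightarrow> real) \<Rightarrow> ereal" where
  "total_var f = (SUP ts \<in> {ts. sorted_wrt (<) ts \<and> set ts \<subseteq> {0..<1}}.
      ereal (\<Sum>i < length ts - 1. \<bar>f (ts ! (i + 1)) - f (ts ! i)\<bar>))"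

definition bv_norm :: "(real \<Rightarrow> real) \<Rightarrow> real" where
  "bv_norm f = (SUP x \<in> {0..<1}. \<bar>f x\<bar>) + real_of_ereal (total_var f)"

definition linf_norm :: "'a measure \<Rightarrow> ('a \<Rightarrow> real) \<Rightarrow> real" where
  "linf_norm M f = real_of_ereal (esssup M (\<lambda>x. ereal \<bar>f x\<bar>))"

definition exp_mixing_BV_Linf :: "(real \<Rightarrow> real) \<Rightarrow> bool" where
  "exp_mixing_BV_Linf T \<longleftrightarrow> (\<exists>C \<theta>. C > 0 \<and> \<theta> > 0 \<and>
     (\<forall>\<psi> \<phi> (n::nat). total_var \<psi> < \<infinity> \<and> \<phi> \<in> borel_measurable circle_measure \<and>
        esssup circle_measure (\<lambda>x. ereal \<bar>\<phi> x\<bar>) < \<infinity> \<longrightarrow>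
        \<bar>(\<integral>x. \<psi> x * \<phi> ((T ^^ n) x) \<partial>circle_measure)
          - (\<integral>x. \<psi> x \<partial>circle_measure) * (\<integral>x. \<phi> x \<partial>circle_measure)\<bar>
        \<le> C * bv_norm \<psi> * linf_norm circle_measure \<phi> * exp (- \<theta> * real n)))"

definition E_set :: "(real \<Rightarrow> real) \<Rightarrow> (real \<Rightarrow> real) \<Rightarrow> nat \<Rightarrow> real \<Rightarrow> (real \<times> real) set" where
  "E_set T1 T2 n r = {(x, y). x \<in> {0..<1} \<and> y \<in> {0..<1} \<and>
      (\<exists>i<n. \<exists>j<n. circ_dist ((T1 ^^ i) x) ((T2 ^^ j) y) < r)}"

end

theory Submission
  imports Defs "HOL-Probability.Probability"
begin

definition nrm :: "real \<Rightarrow> real" where "nrm t = \<bar>t - of_int (round t)\<bar>"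

lemma circ_dist_nrm: "circ_dist x y = nrm (x - y)"
  by (simp add: circ_dist_def nrm_def)

lemma nrm_le: "nrm t \<le> \<bar>t - of_int k\<bar>"
  unfolding nrm_def by (rule round_diff_minimal)

lemma nrm_nonneg: "nrm t \<ge> 0" by (simp add: nrm_def)

lemma nrm_add_int: "nrm (t + of_int k) = nrm t"
proof (rule antisym)
  show "nrm (t + of_int k) \<le> nrm t"
    using nrm_le[of "t + of_int k" "round t + k"] by (simp add: nrm_def)
  show "nrm t \<le> nrm (t + of_int k)"
    using nrm_le[of t "round (t + of_int k) - k"] by (simp add: nrm_def)
qed

lemma nrm_minus: "nrm (- t) = nrm t"
proof (rule antisym)
  show "nrm (- t) \<le> nrm t"
    using nrm_le[of "-t" "- round t"] by (simp add: nrm_def abs_minus_commute)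
  show "nrm t \<le> nrm (-t)"
    using nrm_le[of t "- round (-t)"] by (simp add: nrm_def abs_minus_commute)
qed

lemma nrm_triangle: "nrm (a + b) \<le> nrm a + nrm b"
proof -
  have "nrm (a + b) \<le> \<bar>a + b - of_int (round a + round b)\<bar>" by (rule nrm_le)
  also have "\<dots> \<le> nrm a + nrm b" by (simp add: nrm_def)
  finally show ?thesis .
qed

lemma circ_dist_sym: "circ_dist x y = circ_dist y x"
  using nrm_minus[of "x - y"] by (simp add: circ_dist_nrm)

lemma circ_dist_triangle: "circ_dist x y \<le> circ_dist x z + circ_dist z y"
  using nrm_triangle[of "x - z" "z - y"] by (simp add: circ_dist_nrm)

lemma rot_iter: fixes j :: nat and \<alpha> y :: real shows "(rot \<alpha> ^^ j) y = (if j = 0 then y else frac (y + real j * \<alpha>))"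
proof (induction j)
  case 0 then show ?case by simp
next
  case (Suc j)
  show ?case
  proof (cases "j = 0")
    case True then show ?thesis by (simp add: rot_def)
  next
    case False
    have "frac (frac (y + real j * \<alpha>) + \<alpha>) = frac (y + real j * \<alpha> + \<alpha>)"
      by (simp add: frac_def algebra_simps)
    then show ?thesis using Suc False by (simp add: rot_def algebra_simps)
  qed
qed

lemma rot_iter_eq: fixes j :: nat and \<alpha> y :: real shows "(rot \<alpha> ^^ j) y = y + real j * \<alpha> + of_int (- \<lfloor>y + real j * \<alpha>\<rfloor>) \<or> (rot \<alpha> ^^ j) y = y"
  by (auto simp: rot_iter frac_def)

lemma rot_iter_int: fixes j :: nat and \<alpha> y :: real shows "\<exists>k::int. (rot \<alpha> ^^ j) y = y + real j * \<alpha> + of_int k"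
proof (cases "j = 0")
  case True then show ?thesis by (intro exI[of _ 0]) simp
next
  case False then show ?thesis
    by (intro exI[of _ "- \<lfloor>y + real j * \<alpha>\<rfloor>"]) (simp add: rot_iter frac_def)
qed

lemma circ_dist_rot: fixes j j' :: nat and \<alpha> y :: real shows "circ_dist ((rot \<alpha> ^^ j) y) ((rot \<alpha> ^^ j') y) = nrm ((real j - real j') * \<alpha>)"
proof -
  obtain k where k: "(rot \<alpha> ^^ j) y = y + real j * \<alpha> + of_int k" using rot_iter_int by blast
  obtain k' where k': "(rot \<alpha> ^^ j') y = y + real j' * \<alpha> + of_int k'" using rot_iter_int by blast
  have e: "(rot \<alpha> ^^ j) y - (rot \<alpha> ^^ j') y = (real j - real j') * \<alpha> + of_int (k - k')"
    by (simp add: k k' algebra_simps)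
  have "circ_dist ((rot \<alpha> ^^ j) y) ((rot \<alpha> ^^ j') y) = nrm ((real j - real j') * \<alpha> + of_int (k - k'))"
    by (simp only: circ_dist_nrm e)
  then show ?thesis by (metis nrm_add_int of_int_diff)
qed

lemma prob_circle: "prob_space circle_measure"
  by (rule prob_spaceI) (simp add: circle_measure_def emeasure_restrict_space space_restrict_space)

lemma space_circle: "space circle_measure = {0..<1}"
  by (simp add: circle_measure_def space_restrict_space)

lemma sets_circle: "sets circle_measure = sets (restrict_space borel {0..<1})"
  by (simp add: circle_measure_def sets_restrict_space)

lemma measurable_circle_borel:
  "f \<in> borel_measurable borel \<Longrightarrow> f \<in> borel_measurable circle_measure"
  unfolding circle_measure_def
  by (simp add: measurable_restrict_space1)

lemma round_meas[measurable]: "(\<lambda>x::real. real_of_int (round x)) \<in> borel_measurable borel"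
  unfolding round_def by measurable

lemma circ_dist_meas[measurable]: "(\<lambda>(x,y). circ_dist x y) \<in> borel_measurable (borel \<Otimes>\<^sub>M borel)"
  unfolding circ_dist_def by measurable

lemma frac_meas[measurable]: "(frac :: real \<Rightarrow> real) \<in> borel_measurable borel"
  unfolding frac_def by measurable


lemma rot_meas: "rot \<alpha> \<in> measurable circle_measure circle_measure"
  unfolding circle_measure_def
proof (rule measurable_restrict_space3)
  have "(\<lambda>x. frac (x + \<alpha>)) \<in> borel_measurable borel" by measurable
  then show "rot \<alpha> \<in> measurable lborel lborel" unfolding rot_def[abs_def]
    by (simp only: measurable_lborel1 measurable_lborel2)
  show "rot \<alpha> \<in> {0..<1} \<rightarrow> {0..<1}" by (simp add: rot_def frac_lt_1 Pi_iff)
qed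

lemma funpow_meas: "T \<in> measurable M M \<Longrightarrow> (T ^^ n) \<in> measurable M M"
  by (rule measurable_compose_n)

lemma funpow_space: "T \<in> measurable M M \<Longrightarrow> x \<in> space M \<Longrightarrow> (T ^^ n) x \<in> space M"
  by (rule measurable_space[OF funpow_meas])

lemma rot_iter_in: "y \<in> {0..<1} \<Longrightarrow> (rot \<alpha> ^^ j) y \<in> {0..<1}"
  using funpow_space[OF rot_meas, of y] by (simp add: space_circle)

lemma tv_nonneg: "total_var f \<ge> 0"
proof -
  have "ereal (\<Sum>i < length ([]::real list) - 1. \<bar>f ([] ! (i + 1)) - f ([] ! i)\<bar>) \<le> total_var f"
    unfolding total_var_def by (rule SUP_upper) auto
  then show ?thesis by (simp add: zero_ereal_def)
qed

lemma tv_cong: assumes "\<And>x. x \<in> {0..<1} \<Longrightarrow> f x = g x" shows "total_var f = total_var g"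
  unfolding total_var_def
proof (rule SUP_cong[OF refl])
  fix ts :: "real list" assume ts: "ts \<in> {ts. sorted_wrt (<) ts \<and> set ts \<subseteq> {0..<1}}"
  have "(\<Sum>i < length ts - 1. \<bar>f (ts ! (i + 1)) - f (ts ! i)\<bar>) = (\<Sum>i < length ts - 1. \<bar>g (ts ! (i + 1)) - g (ts ! i)\<bar>)"
  proof (rule sum.cong[OF refl])
    fix i assume "i \<in> {..<length ts - 1}"
    then have "ts ! (i+1) \<in> set ts" "ts ! i \<in> set ts" by auto
    then have "ts ! (i+1) \<in> {0..<1}" "ts ! i \<in> {0..<1}" using ts by auto
    then show "\<bar>f (ts ! (i + 1)) - f (ts ! i)\<bar> = \<bar>g (ts ! (i + 1)) - g (ts ! i)\<bar>"
      by (simp only: assms)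
  qed
  then show "ereal (\<Sum>i < length ts - 1. \<bar>f (ts ! (i + 1)) - f (ts ! i)\<bar>) = ereal (\<Sum>i < length ts - 1. \<bar>g (ts ! (i + 1)) - g (ts ! i)\<bar>)"
    by simp
qed

lemma tv_add: "total_var (\<lambda>x. f x + g x) \<le> total_var f + total_var g"
  unfolding total_var_def
proof (rule SUP_least)
  fix ts :: "real list" assume ts: "ts \<in> {ts. sorted_wrt (<) ts \<and> set ts \<subseteq> {0..<1}}"
  have "(\<Sum>i < length ts - 1. \<bar>(f (ts ! (i + 1)) + g (ts ! (i + 1))) - (f (ts ! i) + g (ts ! i))\<bar>)
     \<le> (\<Sum>i < length ts - 1. \<bar>f (ts ! (i + 1)) - f (ts ! i)\<bar>) + (\<Sum>i < length ts - 1. \<bar>g (ts ! (i + 1)) - g (ts ! i)\<bar>)"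
    unfolding sum.distrib[symmetric] by (rule sum_mono) linarith
  then have "ereal (\<Sum>i < length ts - 1. \<bar>(f (ts ! (i + 1)) + g (ts ! (i + 1))) - (f (ts ! i) + g (ts ! i))\<bar>)
     \<le> ereal (\<Sum>i < length ts - 1. \<bar>f (ts ! (i + 1)) - f (ts ! i)\<bar>) + ereal (\<Sum>i < length ts - 1. \<bar>g (ts ! (i + 1)) - g (ts ! i)\<bar>)"
    by simp
  also have "\<dots> \<le> (SUP ts \<in> {ts. sorted_wrt (<) ts \<and> set ts \<subseteq> {0..<1}}.
      ereal (\<Sum>i < length ts - 1. \<bar>f (ts ! (i + 1)) - f (ts ! i)\<bar>)) + (SUP ts \<in> {ts. sorted_wrt (<) ts \<and> set ts \<subseteq> {0..<1}}.
      ereal (\<Sum>i < length ts - 1. \<bar>g (ts ! (i + 1)) - g (ts ! i)\<bar>))"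
    by (intro add_mono SUP_upper ts)
  finally show "ereal (\<Sum>i < length ts - 1. \<bar>(f (ts ! (i + 1)) + g (ts ! (i + 1))) - (f (ts ! i) + g (ts ! i))\<bar>) \<le> \<dots>" .
qed

lemma tv_neg: "total_var (\<lambda>x. - f x) = total_var f"
proof -
  have "\<And>a b::real. \<bar>- a - - b\<bar> = \<bar>a - b\<bar>" by linarith
  then show ?thesis unfolding total_var_def by simp
qed

lemma tv_diff: "total_var (\<lambda>x. f x - g x) \<le> total_var f + total_var g"
  using tv_add[of f "\<lambda>x. - g x"] tv_neg[of g] by simp

lemma tv_const: "total_var (\<lambda>x. c) = 0"
proof (rule antisym)
  show "total_var (\<lambda>x. c) \<le> 0" unfolding total_var_def by (rule SUP_least) simp
qed (rule tv_nonneg)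

lemma tv_sum: fixes n :: nat and f :: "nat \<Rightarrow> real \<Rightarrow> real" shows "total_var (\<lambda>x. \<Sum>j<n. f j x) \<le> (\<Sum>j<n. total_var (f j))"
proof (induction n)
  case 0 then show ?case by (simp add: tv_const)
next
  case (Suc n)
  have "total_var (\<lambda>x. \<Sum>j<Suc n. f j x) = total_var (\<lambda>x. (\<Sum>j<n. f j x) + f n x)" by simp
  also have "\<dots> \<le> total_var (\<lambda>x. \<Sum>j<n. f j x) + total_var (f n)" by (rule tv_add)
  also have "\<dots> \<le> (\<Sum>j<n. total_var (f j)) + total_var (f n)" by (intro add_mono Suc order.refl)
  finally show ?case by simp
qed

lemma tv_mono01:
  assumes "mono f" "\<And>x. 0 \<le> f x" "\<And>x. f x \<le> 1"
  shows "total_var f \<le> 1"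
  unfolding total_var_def
proof (rule SUP_least)
  fix ts :: "real list" assume ts: "ts \<in> {ts. sorted_wrt (<) ts \<and> set ts \<subseteq> {0..<1}}"
  define L where "L = length ts - 1"
  have "(\<Sum>i < L. \<bar>f (ts ! (i + 1)) - f (ts ! i)\<bar>) = (\<Sum>i < L. f (ts ! Suc i) - f (ts ! i))"
  proof (rule sum.cong[OF refl])
    fix i assume "i \<in> {..<L}"
    then have "i < i + 1" "i + 1 < length ts" unfolding L_def by auto
    then have "ts ! i < ts ! (i+1)" using ts sorted_wrt_nth_less[of "(<)" ts i "i+1"] by blast
    then have "f (ts ! i) \<le> f (ts ! (i+1))" using monoD[OF assms(1), of "ts ! i" "ts ! (i+1)"] by simp
    then show "\<bar>f (ts ! (i + 1)) - f (ts ! i)\<bar> = f (ts ! Suc i) - f (ts ! i)" by simp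
  qed
  also have "\<dots> = f (ts ! L) - f (ts ! 0)" by (rule sum_lessThan_telescope)
  also have "\<dots> \<le> 1" using assms(2)[of "ts ! 0"] assms(3)[of "ts ! L"] by simp
  finally show "ereal (\<Sum>i < length ts - 1. \<bar>f (ts ! (i + 1)) - f (ts ! i)\<bar>) \<le> 1"
    unfolding L_def by simp
qed

definition Iv :: "real \<Rightarrow> real \<Rightarrow> real \<Rightarrow> real" where
  "Iv a b x = (if a < x then 1 else 0) - (if b \<le> x then 1 else 0)"

lemma tv_Iv: "total_var (Iv a b) \<le> 2"
proof -
  have "total_var (Iv a b) \<le> total_var (\<lambda>x. if a < x then 1 else 0) + total_var (\<lambda>x. if b \<le> x then 1 else 0)"
    unfolding Iv_def by (rule tv_diff)
  also have "\<dots> \<le> 1 + 1"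
  proof (intro add_mono tv_mono01)
    show "mono (\<lambda>x::real. if a < x then 1 else (0::real))" by (rule monoI) simp
    show "mono (\<lambda>x::real. if b \<le> x then 1 else (0::real))" by (rule monoI) simp
  qed simp_all
  finally show ?thesis by simp
qed

lemma Iv_eq: "a < b \<Longrightarrow> Iv a b x = (if a < x \<and> x < b then 1 else 0)"
  by (auto simp: Iv_def)


lemma ball_char:
  assumes z: "0 \<le> z" "z < 1" and r: "0 < \<rho>" "\<rho> < 1/2" and x: "0 \<le> x" "x < 1"
  shows "circ_dist x z < \<rho> \<longleftrightarrow>
    (z-\<rho> < x \<and> x < z+\<rho>) \<or> (z-\<rho>+1 < x \<and> x < z+\<rho>+1) \<or> (z-\<rho>-1 < x \<and> x < z+\<rho>-1)"
proof
  assume h: "circ_dist x z < \<rho>"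
  define k where "k = round (x - z)"
  have d: "\<bar>x - z - of_int k\<bar> < \<rho>" using h by (simp add: circ_dist_def k_def)
  have "\<bar>of_int k - (x - z)\<bar> \<le> 1/2" unfolding k_def by (rule of_int_round_abs_le)
  then have "of_int k - (x - z) \<le> 1/2" "-(of_int k - (x - z)) \<le> 1/2" by linarith+
  then have "of_int k < (3/2::real)" "of_int k > (-3/2::real)" using z x by linarith+
  then have "k < 2" "k > -2" by linarith+
  then have "k = 0 \<or> k = 1 \<or> k = -1" by linarith
  then show "(z-\<rho> < x \<and> x < z+\<rho>) \<or> (z-\<rho>+1 < x \<and> x < z+\<rho>+1) \<or> (z-\<rho>-1 < x \<and> x < z+\<rho>-1)"
    using d by auto
next
  assume h: "(z-\<rho> < x \<and> x < z+\<rho>) \<or> (z-\<rho>+1 < x \<and> x < z+\<rho>+1) \<or> (z-\<rho>-1 < x \<and> x < z+\<rho>-1)"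
  have le: "circ_dist x z \<le> \<bar>x - z - of_int k\<bar>" for k
    unfolding circ_dist_nrm by (rule nrm_le)
  from h show "circ_dist x z < \<rho>"
  proof (elim disjE)
    assume "z-\<rho> < x \<and> x < z+\<rho>" then show ?thesis using le[of 0] by auto
  next
    assume "z-\<rho>+1 < x \<and> x < z+\<rho>+1" then show ?thesis using le[of 1] by auto
  next
    assume "z-\<rho>-1 < x \<and> x < z+\<rho>-1" then show ?thesis using le[of "-1"] by auto
  qed
qed

definition bz :: "real \<Rightarrow> real \<Rightarrow> real \<Rightarrow> real" where
  "bz z \<rho> x = Iv (z-\<rho>) (z+\<rho>) x + Iv (z-\<rho>+1) (z+\<rho>+1) x + Iv (z-\<rho>-1) (z+\<rho>-1) x"

lemma bz_eq:
  assumes z: "0 \<le> z" "z < 1" and r: "0 < \<rho>" "\<rho> < 1/2" and x: "0 \<le> x" "x < 1"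
  shows "bz z \<rho> x = (if circ_dist x z < \<rho> then 1 else 0)"
  unfolding ball_char[OF assms] bz_def using r by (auto simp: Iv_eq)

lemma tv_bz: "total_var (bz z \<rho>) \<le> 6"
proof -
  have "total_var (bz z \<rho>) \<le> total_var (\<lambda>x. Iv (z-\<rho>) (z+\<rho>) x + Iv (z-\<rho>+1) (z+\<rho>+1) x) + total_var (Iv (z-\<rho>-1) (z+\<rho>-1))"
    unfolding bz_def[abs_def] by (rule tv_add)
  also have "\<dots> \<le> (total_var (Iv (z-\<rho>) (z+\<rho>)) + total_var (Iv (z-\<rho>+1) (z+\<rho>+1))) + total_var (Iv (z-\<rho>-1) (z+\<rho>-1))"
    by (intro add_mono tv_add order.refl)
  also have "\<dots> \<le> (2 + 2) + 2" by (intro add_mono tv_Iv)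
  finally show ?thesis by simp
qed


lemma circ_dist_meas1: "(\<lambda>x. circ_dist x z) \<in> borel_measurable circle_measure"
  by (rule measurable_circle_borel) (unfold circ_dist_def, measurable)

lemma ball_sets: "{x\<in>{0..<1}. circ_dist x z < \<rho>} \<in> sets circle_measure"
proof -
  have "{x\<in>space circle_measure. circ_dist x z < \<rho>} \<in> sets circle_measure"
    by (rule borel_measurable_less[OF circ_dist_meas1 borel_measurable_const])
  then show ?thesis by (simp add: space_circle)
qed

lemma ball_measure:
  assumes z: "0 \<le> z" "z < 1" and r: "0 < \<rho>" "\<rho> < 1/2"
  shows "measure circle_measure {x\<in>{0..<1}. circ_dist x z < \<rho>} = 2 * \<rho>"
proof -
  let ?B = "{x\<in>{0..<1}. circ_dist x z < \<rho>}"
  have B: "?B = {x\<in>{0..<1}. (z-\<rho> < x \<and> x < z+\<rho>) \<or> (z-\<rho>+1 < x \<and> x < z+\<rho>+1) \<or> (z-\<rho>-1 < x \<and> x < z+\<rho>-1)}"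
    using ball_char[OF z r] by auto
  have "measure circle_measure ?B = measure lborel ?B"
    unfolding circle_measure_def by (rule measure_restrict_space) auto
  also have "\<dots> = 2 * \<rho>"
  proof (cases "\<rho> \<le> z \<and> z + \<rho> \<le> 1")
    case True
    then have "?B = {z-\<rho><..<z+\<rho>}" unfolding B using r by auto
    then show ?thesis using r by simp
  next
    case False
    show ?thesis
    proof (cases "z < \<rho>")
      case True
      then have e: "?B = {0..<z+\<rho>} \<union> {z-\<rho>+1<..<1}" unfolding B using r z by auto
      have "measure lborel ({0..<z+\<rho>} \<union> {z-\<rho>+1<..<1}) = measure lborel {0..<z+\<rho>} + measure lborel {z-\<rho>+1<..<1}"
        by (rule measure_Union) (use r z True in auto)
      then show ?thesis using e r z True by simp
    next
      case False
      then have zz: "z + \<rho> > 1" using \<open>\<not> (\<rho> \<le> z \<and> z + \<rho> \<le> 1)\<close> by auto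
      then have e: "?B = {0..<z+\<rho>-1} \<union> {z-\<rho><..<1}" unfolding B using r z by auto
      have "measure lborel ({0..<z+\<rho>-1} \<union> {z-\<rho><..<1}) = measure lborel {0..<z+\<rho>-1} + measure lborel {z-\<rho><..<1}"
        by (rule measure_Union) (use r z zz in auto)
      then show ?thesis using e r z zz by simp
    qed
  qed
  finally show ?thesis .
qed


lemma real_of_ereal_le1: "e \<le> (1::ereal) \<Longrightarrow> real_of_ereal e \<le> 1"
  by (cases e) auto

lemma mix_iter:
  fixes T F :: "real \<Rightarrow> real" and C \<theta> :: real and g :: nat
  assumes T: "T \<in> measurable circle_measure circle_measure"
    and mix: "\<And>\<psi> \<phi> n. total_var \<psi> < \<infinity> \<Longrightarrow> \<phi> \<in> borel_measurable circle_measure \<Longrightarrow>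
        esssup circle_measure (\<lambda>x. ereal \<bar>\<phi> x\<bar>) < \<infinity> \<Longrightarrow>
        \<bar>(\<integral>x. \<psi> x * \<phi> ((T ^^ n) x) \<partial>circle_measure)
          - (\<integral>x. \<psi> x \<partial>circle_measure) * (\<integral>x. \<phi> x \<partial>circle_measure)\<bar>
        \<le> C * bv_norm \<psi> * linf_norm circle_measure \<phi> * exp (- \<theta> * real n)"
    and eps: "C * bv_norm F * exp (- \<theta> * real g) \<ge> 0"
    and Fm: "F \<in> borel_measurable circle_measure"
    and Ftv: "total_var F < \<infinity>"
    and F01: "\<And>x. x \<in> {0..<1} \<Longrightarrow> 0 \<le> F x \<and> F x \<le> 1"
  shows "(\<integral>x. (\<Prod>l<m. F ((T^^(l*g)) x)) \<partial>circle_measure)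
     \<le> (\<integral>x. F x \<partial>circle_measure) ^ m + real m * (C * bv_norm F * exp (- \<theta> * real g))"
proof -
  interpret P: prob_space circle_measure by (rule prob_circle)
  define \<epsilon> where "\<epsilon> = C * bv_norm F * exp (- \<theta> * real g)"
  define \<Phi> where "\<Phi> m x = (\<Prod>l<m. F ((T^^(l*g)) x))" for m x
  have Tsp: "(T^^k) x \<in> {0..<1}" if "x \<in> {0..<1}" for k x
    using funpow_space[OF T, of x k] that by (simp add: space_circle)
  have \<Phi>m: "\<Phi> m \<in> borel_measurable circle_measure" for m
    unfolding \<Phi>_def
    by (intro borel_measurable_prod measurable_compose[OF funpow_meas[OF T] Fm])
  have \<Phi>b: "0 \<le> \<Phi> m x \<and> \<Phi> m x \<le> 1" if "x \<in> {0..<1}" for m x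
    unfolding \<Phi>_def using F01 Tsp[OF that] by (auto intro!: prod_nonneg prod_le_1)
  have \<Phi>i: "integrable circle_measure (\<Phi> m)" for m
    by (rule P.integrable_const_bound[where B=1]) (use \<Phi>b \<Phi>m in \<open>auto simp: space_circle\<close>)
  have Fi: "integrable circle_measure F"
    by (rule P.integrable_const_bound[where B=1]) (use F01 Fm in \<open>auto simp: space_circle\<close>)
  have IF0: "0 \<le> (\<integral>x. F x \<partial>circle_measure)"
    by (rule integral_nonneg_AE) (use F01 in \<open>auto simp: space_circle\<close>)
  have IF1: "(\<integral>x. F x \<partial>circle_measure) \<le> 1"
  proof -
    have "(\<integral>x. F x \<partial>circle_measure) \<le> (\<integral>x. 1 \<partial>circle_measure)"
      by (rule integral_mono_AE[OF Fi]) (use F01 in \<open>auto simp: space_circle\<close>)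
    then show ?thesis by (simp add: P.prob_space)
  qed
  have ess: "esssup circle_measure (\<lambda>x. ereal \<bar>\<Phi> m x\<bar>) \<le> 1" for m
  proof (rule esssup_I)
    show "(\<lambda>x. ereal \<bar>\<Phi> m x\<bar>) \<in> borel_measurable circle_measure" using \<Phi>m[of m] by measurable
    show "AE x in circle_measure. ereal \<bar>\<Phi> m x\<bar> \<le> 1"
      using \<Phi>b by (auto simp: space_circle)
  qed
  have step: "(\<integral>x. \<Phi> (Suc m) x \<partial>circle_measure) \<le> (\<integral>x. F x \<partial>circle_measure) * (\<integral>x. \<Phi> m x \<partial>circle_measure) + \<epsilon>" for m
  proof -
    have e: "\<Phi> (Suc m) x = F x * \<Phi> m ((T^^g) x)" for x
    proof -
      have "(T ^^ (Suc l * g)) x = (T^^(l*g)) ((T^^g) x)" for l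
      proof -
        have "Suc l * g = l * g + g" by simp
        then show ?thesis by (simp only: funpow_add o_apply)
      qed
      then show ?thesis unfolding \<Phi>_def prod.lessThan_Suc_shift by simp
    qed
    have lin: "linf_norm circle_measure (\<Phi> m) \<le> 1"
      unfolding linf_norm_def by (rule real_of_ereal_le1[OF ess])
    have "\<bar>(\<integral>x. F x * \<Phi> m ((T ^^ g) x) \<partial>circle_measure)
          - (\<integral>x. F x \<partial>circle_measure) * (\<integral>x. \<Phi> m x \<partial>circle_measure)\<bar>
        \<le> C * bv_norm F * linf_norm circle_measure (\<Phi> m) * exp (- \<theta> * real g)"
      by (rule mix[OF Ftv \<Phi>m]) (use ess[of m] in auto)
    also have "\<dots> = \<epsilon> * linf_norm circle_measure (\<Phi> m)" unfolding \<epsilon>_def by simp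
    also have "\<dots> \<le> \<epsilon> * 1" using eps lin unfolding \<epsilon>_def by (intro mult_left_mono) auto
    finally show ?thesis unfolding e by simp
  qed
  show ?thesis
  proof (induction m)
    case 0 then show ?case by simp
  next
    case (Suc m)
    let ?I = "(\<integral>x. F x \<partial>circle_measure)"
    have "(\<integral>x. \<Phi> (Suc m) x \<partial>circle_measure) \<le> ?I * (\<integral>x. \<Phi> m x \<partial>circle_measure) + \<epsilon>" by (rule step)
    also have "\<dots> \<le> ?I * (?I ^ m + real m * \<epsilon>) + \<epsilon>"
    proof -
      have IH': "(\<integral>x. \<Phi> m x \<partial>circle_measure) \<le> ?I ^ m + real m * \<epsilon>"
        using Suc.IH unfolding \<Phi>_def \<epsilon>_def .
      show ?thesis using mult_left_mono[OF IH' IF0] by linarith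
    qed
    also have "\<dots> \<le> ?I ^ Suc m + real (Suc m) * \<epsilon>"
    proof -
      have "?I * (real m * \<epsilon>) \<le> 1 * (real m * \<epsilon>)"
        using IF1 eps unfolding \<epsilon>_def by (intro mult_right_mono) auto
      then show ?thesis by (simp add: algebra_simps)
    qed
    finally show ?case unfolding \<Phi>_def \<epsilon>_def .
  qed
qed


lemma sum_indicator_unique:
  fixes P :: "nat \<Rightarrow> bool"
  assumes "\<And>j j'. j < n \<Longrightarrow> j' < n \<Longrightarrow> P j \<Longrightarrow> P j' \<Longrightarrow> j = j'"
  shows "(\<Sum>j<n. (if P j then 1 else 0::real)) = (if \<exists>j<n. P j then 1 else 0)"
proof (cases "\<exists>j<n. P j")
  case True
  then obtain j0 where j0: "j0 < n" "P j0" by blast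
  have "(\<Sum>j<n. (if P j then 1 else 0::real)) = (\<Sum>j<n. (if j = j0 then 1 else 0::real))"
    by (rule sum.cong[OF refl]) (use assms j0 in auto)
  also have "\<dots> = 1" using j0 by simp
  finally show ?thesis using True by simp
next
  case False then show ?thesis by simp
qed

lemma section_bound:
  fixes T :: "real \<Rightarrow> real" and C \<theta> \<alpha> y \<rho> r :: real and n g m :: nat
  assumes T: "T \<in> measurable circle_measure circle_measure"
    and mix: "\<And>\<psi> \<phi> n. total_var \<psi> < \<infinity> \<Longrightarrow> \<phi> \<in> borel_measurable circle_measure \<Longrightarrow>
        esssup circle_measure (\<lambda>x. ereal \<bar>\<phi> x\<bar>) < \<infinity> \<Longrightarrow>
        \<bar>(\<integral>x. \<psi> x * \<phi> ((T ^^ n) x) \<partial>circle_measure)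
          - (\<integral>x. \<psi> x \<partial>circle_measure) * (\<integral>x. \<phi> x \<partial>circle_measure)\<bar>
        \<le> C * bv_norm \<psi> * linf_norm circle_measure \<phi> * exp (- \<theta> * real n)"
    and C: "C \<ge> 0"
    and y: "y \<in> {0..<1}" and r: "0 < \<rho>" "\<rho> < 1/2" "\<rho> \<le> r"
    and lg: "\<And>l. l < m \<Longrightarrow> l * g < n"
    and disj: "\<And>j j'. j < n \<Longrightarrow> j' < n \<Longrightarrow> j \<noteq> j' \<Longrightarrow>
        2 * \<rho> \<le> circ_dist ((rot \<alpha> ^^ j) y) ((rot \<alpha> ^^ j') y)"
  shows "measure circle_measure {x\<in>{0..<1}. \<forall>i<n. \<forall>j<n. r \<le> circ_dist ((T^^i) x) ((rot \<alpha> ^^ j) y)}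
     \<le> (1 - 2 * real n * \<rho>) ^ m + real m * (C * (1 + 6 * real n) * exp (- \<theta> * real g))"
proof -
  interpret P: prob_space circle_measure by (rule prob_circle)
  define z where "z j = (rot \<alpha> ^^ j) y" for j
  have zin: "0 \<le> z j" "z j < 1" for j using rot_iter_in[OF y] by (auto simp: z_def)
  define B where "B j = {x\<in>{0..<1}. circ_dist x (z j) < \<rho>}" for j
  define F where "F x = 1 - (\<Sum>j<n. bz (z j) \<rho> x)" for x
  have uniq: "j = j'" if "j < n" "j' < n" "circ_dist x (z j) < \<rho>" "circ_dist x (z j') < \<rho>" for x j j'
  proof (rule ccontr)
    assume "j \<noteq> j'"
    then have "2 * \<rho> \<le> circ_dist (z j) (z j')" using disj that unfolding z_def by blast
    moreover have "circ_dist (z j) (z j') \<le> circ_dist (z j) x + circ_dist x (z j')" by (rule circ_dist_triangle)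
    ultimately show False using that circ_dist_sym[of "z j" x] by linarith
  qed
  have Find: "F x = 1 - (\<Sum>j<n. indicator (B j) x)" if "x \<in> {0..<1}" for x
    unfolding F_def B_def using bz_eq[OF zin r(1,2)] that
    by (intro arg_cong[where f="\<lambda>s. 1 - s"] sum.cong) (auto simp: indicator_def)
  have Fif: "F x = (if \<exists>j<n. circ_dist x (z j) < \<rho> then 0 else 1)" if "x \<in> {0..<1}" for x
  proof -
    have "F x = 1 - (\<Sum>j<n. (if circ_dist x (z j) < \<rho> then 1 else 0::real))"
      unfolding F_def using bz_eq[OF zin r(1,2)] that by simp
    also have "\<dots> = 1 - (if \<exists>j<n. circ_dist x (z j) < \<rho> then 1 else 0)"
      by (subst sum_indicator_unique) (use uniq in auto)
    finally show ?thesis by simp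
  qed
  have F01: "0 \<le> F x \<and> F x \<le> 1" if "x \<in> {0..<1}" for x using Fif[OF that] by simp
  have Fb: "F \<in> borel_measurable borel"
    unfolding F_def[abs_def] bz_def Iv_def by measurable
  have Fm: "F \<in> borel_measurable circle_measure" by (rule measurable_circle_borel[OF Fb])
  have Ftv6: "total_var F \<le> ereal (6 * real n)"
  proof -
    have "total_var F \<le> total_var (\<lambda>x. 1) + total_var (\<lambda>x. \<Sum>j<n. bz (z j) \<rho> x)"
      unfolding F_def[abs_def] by (rule tv_diff)
    also have "\<dots> \<le> 0 + (\<Sum>j<n. total_var (bz (z j) \<rho>))"
      unfolding tv_const by (intro add_mono order.refl tv_sum)
    also have "\<dots> \<le> 0 + (\<Sum>j<n. 6)" by (intro add_mono order.refl sum_mono tv_bz)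
    also have "\<dots> = ereal (6 * real n)" by simp
    finally show ?thesis .
  qed
  have Ftv: "total_var F < \<infinity>" using Ftv6 by (rule le_less_trans) simp
  have sup1: "(SUP x\<in>{0..<1}. \<bar>F x\<bar>) \<le> 1"
    by (rule cSUP_least) (use F01 in auto)
  have sup0: "0 \<le> (SUP x\<in>{0..<1}. \<bar>F x\<bar>)"
  proof -
    have "bdd_above ((\<lambda>x. \<bar>F x\<bar>) ` {0..<1})" using F01 by (intro bdd_aboveI[of _ 1]) auto
    then have "\<bar>F 0\<bar> \<le> (SUP x\<in>{0..<1}. \<bar>F x\<bar>)" by (intro cSUP_upper) auto
    then show ?thesis by linarith
  qed
  have tvr: "0 \<le> real_of_ereal (total_var F) \<and> real_of_ereal (total_var F) \<le> 6 * real n"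
    using tv_nonneg[of F] Ftv6 by (cases "total_var F") auto
  have bv0: "0 \<le> bv_norm F" and bv1: "bv_norm F \<le> 1 + 6 * real n"
    unfolding bv_norm_def using sup0 sup1 tvr by linarith+
  have eps: "C * bv_norm F * exp (- \<theta> * real g) \<ge> 0" using C bv0 by simp
  have intF: "(\<integral>x. F x \<partial>circle_measure) = 1 - 2 * real n * \<rho>"
  proof -
    have Bs: "B j \<in> sets circle_measure" for j unfolding B_def by (rule ball_sets)
    have "(\<integral>x. F x \<partial>circle_measure) = (\<integral>x. 1 - (\<Sum>j<n. indicator (B j) x) \<partial>circle_measure)"
      by (rule Bochner_Integration.integral_cong[OF refl]) (simp add: Find space_circle)
    also have "\<dots> = 1 - (\<Sum>j<n. measure circle_measure (B j))"
    proof -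
      have ii: "integrable circle_measure (indicator (B j) :: real \<Rightarrow> real)" for j
        by (intro integrable_real_indicator Bs) (use P.emeasure_finite infinity_ennreal_def top.not_eq_extremum in metis)
      have "(\<integral>x. 1 - (\<Sum>j<n. indicator (B j) x :: real) \<partial>circle_measure) =
            (\<integral>x. 1 \<partial>circle_measure) - (\<integral>x. (\<Sum>j<n. indicator (B j) x :: real) \<partial>circle_measure)"
        by (rule Bochner_Integration.integral_diff) (use ii in \<open>auto intro!: Bochner_Integration.integrable_sum\<close>)
      also have "(\<integral>x. (\<Sum>j<n. indicator (B j) x :: real) \<partial>circle_measure) = (\<Sum>j<n. (\<integral>x. indicator (B j) x \<partial>circle_measure))"
        by (rule Bochner_Integration.integral_sum) (use ii in auto)
      also have "\<dots> = (\<Sum>j<n. measure circle_measure (B j))"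
        using Bs by (simp add: Int_absorb2 sets.sets_into_space)
      finally show ?thesis by (simp add: P.prob_space)
    qed
    also have "\<dots> = 1 - 2 * real n * \<rho>"
      unfolding B_def using ball_measure[OF zin r(1,2)] by simp
    finally show ?thesis .
  qed
  define \<Phi> where "\<Phi> x = (\<Prod>l<m. F ((T^^(l*g)) x))" for x
  have Tsp: "(T^^k) x \<in> {0..<1}" if "x \<in> {0..<1}" for k x
    using funpow_space[OF T, of x k] that by (simp add: space_circle)
  have \<Phi>b: "0 \<le> \<Phi> x \<and> \<Phi> x \<le> 1" if "x \<in> {0..<1}" for x
    unfolding \<Phi>_def using F01 Tsp[OF that] by (auto intro!: prod_nonneg prod_le_1)
  have \<Phi>m: "\<Phi> \<in> borel_measurable circle_measure"
    unfolding \<Phi>_def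
    by (intro borel_measurable_prod measurable_compose[OF funpow_meas[OF T] Fm])
  have \<Phi>i: "integrable circle_measure \<Phi>"
    by (rule P.integrable_const_bound[where B=1]) (use \<Phi>b \<Phi>m in \<open>auto simp: space_circle\<close>)
  have mi: "(\<integral>x. \<Phi> x \<partial>circle_measure) \<le> (\<integral>x. F x \<partial>circle_measure) ^ m + real m * (C * bv_norm F * exp (- \<theta> * real g))"
    unfolding \<Phi>_def by (rule mix_iter[OF T mix eps Fm Ftv F01])
  have main: "(\<integral>x. \<Phi> x \<partial>circle_measure) \<le> (1 - 2 * real n * \<rho>) ^ m + real m * (C * bv_norm F * exp (- \<theta> * real g))"
    using mi unfolding intF .
  have e2: "real m * (C * bv_norm F * exp (- \<theta> * real g)) \<le> real m * (C * (1 + 6 * real n) * exp (- \<theta> * real g))"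
    using bv1 C by (intro mult_left_mono mult_right_mono) auto
  define S where "S = {x\<in>{0..<1}. \<forall>i<n. \<forall>j<n. r \<le> circ_dist ((T^^i) x) ((rot \<alpha> ^^ j) y)}"
  have S1: "\<Phi> x = 1" if "x \<in> S" for x
  proof -
    have xS: "x \<in> {0..<1}" "\<And>i j. i<n \<Longrightarrow> j<n \<Longrightarrow> r \<le> circ_dist ((T^^i) x) ((rot \<alpha> ^^ j) y)"
      using that unfolding S_def by auto
    have "F ((T^^(l*g)) x) = 1" if "l < m" for l
    proof -
      have "\<not> (\<exists>j<n. circ_dist ((T^^(l*g)) x) (z j) < \<rho>)"
      proof
        assume "\<exists>j<n. circ_dist ((T^^(l*g)) x) (z j) < \<rho>"
        then obtain j where j: "j < n" "circ_dist ((T^^(l*g)) x) (z j) < \<rho>" by blast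
        show False using xS(2)[OF lg[OF that] j(1)] j(2) r(3) unfolding z_def by linarith
      qed
      then show ?thesis using Fif[OF Tsp[OF xS(1)]] by simp
    qed
    then show ?thesis unfolding \<Phi>_def by simp
  qed
  have "measure circle_measure S \<le> (\<integral>x. \<Phi> x \<partial>circle_measure)"
  proof (cases "S \<in> sets circle_measure")
    case True
    have "measure circle_measure S = (\<integral>x. indicator S x \<partial>circle_measure)"
      using True by (simp add: Int_absorb2 sets.sets_into_space)
    also have "\<dots> \<le> (\<integral>x. \<Phi> x \<partial>circle_measure)"
    proof (rule integral_mono)
      show "integrable circle_measure (indicator S :: real \<Rightarrow> real)"
        by (intro integrable_real_indicator True) (use P.emeasure_finite infinity_ennreal_def top.not_eq_extremum in metis)
      show "integrable circle_measure \<Phi>" by (rule \<Phi>i)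
      fix x assume "x \<in> space circle_measure"
      then show "indicator S x \<le> \<Phi> x" using S1 \<Phi>b by (auto simp: indicator_def space_circle)
    qed
    finally show ?thesis .
  next
    case False
    then have "measure circle_measure S = 0" by (simp add: measure_notin_sets)
    moreover have "0 \<le> (\<integral>x. \<Phi> x \<partial>circle_measure)"
      by (rule integral_nonneg_AE) (use \<Phi>b in \<open>auto simp: space_circle\<close>)
    ultimately show ?thesis by simp
  qed
  then show ?thesis using main e2 unfolding S_def by linarith
qed


lemma circle_to_borel: "f \<in> measurable N circle_measure \<Longrightarrow> f \<in> borel_measurable N"
proof -
  have "(\<lambda>x. x) \<in> borel_measurable circle_measure" by (rule measurable_circle_borel) simp
  moreover assume "f \<in> measurable N circle_measure"
  ultimately show ?thesis using measurable_compose by blast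
qed

lemma space_pair_circle: "space (circle_measure \<Otimes>\<^sub>M circle_measure) = {0..<1} \<times> {0..<1}"
  by (simp add: space_pair_measure space_circle)

lemma E_meas:
  assumes T: "T \<in> measurable circle_measure circle_measure"
  shows "E_set T (rot \<alpha>) n r \<in> sets (circle_measure \<Otimes>\<^sub>M circle_measure)"
proof -
  let ?M = "circle_measure \<Otimes>\<^sub>M circle_measure"
  define f where "f i j p = circ_dist ((T^^i) (fst p)) ((rot \<alpha> ^^ j) (snd p))" for i j p
  have fm: "f i j \<in> borel_measurable ?M" for i j
  proof -
    have a: "(\<lambda>p. (T^^i) (fst p)) \<in> borel_measurable ?M"
      by (rule circle_to_borel, rule measurable_compose[OF measurable_fst funpow_meas[OF T]])
    have b: "(\<lambda>p. (rot \<alpha>^^j) (snd p)) \<in> borel_measurable ?M"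
      by (rule circle_to_borel, rule measurable_compose[OF measurable_snd funpow_meas[OF rot_meas]])
    have "(\<lambda>p. ((T^^i) (fst p), (rot \<alpha>^^j) (snd p))) \<in> measurable ?M (borel \<Otimes>\<^sub>M borel)"
      using a b by (rule measurable_Pair)
    from measurable_compose[OF this circ_dist_meas] show ?thesis
      unfolding f_def[abs_def] by simp
  qed
  have e: "E_set T (rot \<alpha>) n r = (\<Union>i\<in>{..<n}. \<Union>j\<in>{..<n}. {p \<in> space ?M. f i j p < r})"
    unfolding E_set_def f_def space_pair_circle by (auto simp: Bex_def; metis)
  show ?thesis unfolding e
    by (intro sets.finite_UN finite_lessThan borel_measurable_less fm borel_measurable_const)
qed


lemma disj_from_gap:
  fixes n :: nat and \<alpha> \<rho> y :: real
  assumes gap: "\<And>k::nat. 0 < k \<Longrightarrow> k < n \<Longrightarrow> 2 * \<rho> \<le> nrm (real k * \<alpha>)"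
    and j: "j < n" "j' < n" "j \<noteq> j'"
  shows "2 * \<rho> \<le> circ_dist ((rot \<alpha> ^^ j) y) ((rot \<alpha> ^^ j') y)"
proof (cases "j' < j")
  case True
  have "real j - real j' = real (j - j')" using True by simp
  then show ?thesis unfolding circ_dist_rot using gap[of "j - j'"] True j by simp
next
  case False
  then have jj: "j < j'" using j by simp
  have "(real j - real j') * \<alpha> = - (real (j' - j) * \<alpha>)" using jj by (simp add: algebra_simps)
  then have "nrm ((real j - real j') * \<alpha>) = nrm (real (j' - j) * \<alpha>)" using jj by (simp add: nrm_minus)
  then show ?thesis unfolding circ_dist_rot using gap[of "j' - j"] jj j by simp
qed

lemma prod_bound:
  fixes T :: "real \<Rightarrow> real" and C \<theta> \<alpha> \<rho> r :: real and n g m :: nat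
  assumes T: "T \<in> measurable circle_measure circle_measure"
    and mix: "\<And>\<psi> \<phi> n. total_var \<psi> < \<infinity> \<Longrightarrow> \<phi> \<in> borel_measurable circle_measure \<Longrightarrow>
        esssup circle_measure (\<lambda>x. ereal \<bar>\<phi> x\<bar>) < \<infinity> \<Longrightarrow>
        \<bar>(\<integral>x. \<psi> x * \<phi> ((T ^^ n) x) \<partial>circle_measure)
          - (\<integral>x. \<psi> x \<partial>circle_measure) * (\<integral>x. \<phi> x \<partial>circle_measure)\<bar>
        \<le> C * bv_norm \<psi> * linf_norm circle_measure \<phi> * exp (- \<theta> * real n)"
    and C: "C \<ge> 0"
    and r: "0 < \<rho>" "\<rho> < 1/2" "\<rho> \<le> r"
    and lg: "\<And>l. l < m \<Longrightarrow> l * g < n"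
    and gap: "\<And>k::nat. 0 < k \<Longrightarrow> k < n \<Longrightarrow> 2 * \<rho> \<le> nrm (real k * \<alpha>)"
  shows "emeasure (circle_measure \<Otimes>\<^sub>M circle_measure) ({0..<1} \<times> {0..<1} - E_set T (rot \<alpha>) n r)
     \<le> ennreal ((1 - 2 * real n * \<rho>) ^ m + real m * (C * (1 + 6 * real n) * exp (- \<theta> * real g)))"
proof -
  interpret P: prob_space circle_measure by (rule prob_circle)
  interpret PP: pair_prob_space circle_measure circle_measure ..
  let ?b = "(1 - 2 * real n * \<rho>) ^ m + real m * (C * (1 + 6 * real n) * exp (- \<theta> * real g))"
  let ?D = "{0..<1} \<times> {0..<1} - E_set T (rot \<alpha>) n r"
  have D: "?D \<in> sets (circle_measure \<Otimes>\<^sub>M circle_measure)"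
    unfolding space_pair_circle[symmetric] by (intro sets.Diff sets.top E_meas T)
  have "emeasure (circle_measure \<Otimes>\<^sub>M circle_measure) ?D = (\<integral>\<^sup>+y. emeasure circle_measure ((\<lambda>x. (x, y)) -` ?D) \<partial>circle_measure)"
    by (rule PP.emeasure_pair_measure_alt2[OF D])
  also have "\<dots> \<le> (\<integral>\<^sup>+y. ennreal ?b \<partial>circle_measure)"
  proof (rule nn_integral_mono)
    fix y assume "y \<in> space circle_measure"
    then have y: "y \<in> {0..<1}" by (simp add: space_circle)
    have sec: "(\<lambda>x. (x, y)) -` ?D = {x\<in>{0..<1}. \<forall>i<n. \<forall>j<n. r \<le> circ_dist ((T^^i) x) ((rot \<alpha> ^^ j) y)}"
      using y unfolding E_set_def by (auto simp: not_less not_le; metis not_less)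
    have "measure circle_measure ((\<lambda>x. (x, y)) -` ?D) \<le> ?b"
      unfolding sec
      by (rule section_bound[OF T mix C y r lg disj_from_gap[OF gap]]) auto
    then show "emeasure circle_measure ((\<lambda>x. (x, y)) -` ?D) \<le> ennreal ?b"
      by (simp add: P.emeasure_eq_measure ennreal_leI)
  qed
  also have "\<dots> = ennreal ?b" by (simp add: P.emeasure_space_1)
  finally show ?thesis .
qed


lemma ln_ratio:
  fixes k n :: real
  assumes "3 \<le> k" "k \<le> n"
  shows "ln n / n\<^sup>2 \<le> ln k / k\<^sup>2"
proof -
  have k0: "k > 0" using assms by simp
  define t where "t = n / k"
  have t1: "t \<ge> 1" using assms unfolding t_def by simp
  have n: "n = k * t" unfolding t_def using k0 by simp
  have lk: "ln k \<ge> 1"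
  proof -
    have "exp 1 \<le> k" using exp_le assms by linarith
    then show ?thesis using k0 by (simp add: ln_ge_iff)
  qed
  have "ln t \<le> t - 1" using t1 by (intro ln_le_minus_one) simp
  also have "\<dots> \<le> t\<^sup>2 - 1" using mult_left_mono[of 1 t t] t1 by (simp add: power2_eq_square)
  also have "\<dots> \<le> (t\<^sup>2 - 1) * ln k"
  proof -
    have "t\<^sup>2 \<ge> 1" using t1 by (simp add: one_le_power)
    then show ?thesis using mult_left_mono[of 1 "ln k" "t\<^sup>2 - 1"] lk by simp
  qed
  finally have "ln n \<le> t\<^sup>2 * ln k" unfolding n using k0 t1 by (simp add: ln_mult algebra_simps)
  then have "ln n / n\<^sup>2 \<le> t\<^sup>2 * ln k / n\<^sup>2" using k0 t1 n by (intro divide_right_mono) auto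
  also have "\<dots> = ln k / k\<^sup>2" unfolding n using k0 t1 by (simp add: power2_eq_square field_simps)
  finally show ?thesis .
qed

lemma arith_main:
  fixes n G \<theta> K \<rho> :: real and g m :: nat
  assumes n3: "3 \<le> n" and G: "G > 0" and th: "\<theta> > 0" and K: "K = 3/\<theta> + 2"
    and g1: "g \<ge> 1" and gle: "real g \<le> 3 * ln n / \<theta> + 2" and mg: "real m * real g \<ge> n"
    and a1: "2 * G * ln n / n \<le> 1" and \<rho>: "\<rho> = G * ln n / n\<^sup>2"
  shows "(1 - 2 * n * \<rho>) ^ m \<le> exp (- (2 * G / K))"
proof -
  define a where "a = 2 * G * ln n / n"
  have n0: "n > 0" using n3 by simp
  have ln1: "ln n \<ge> 1"
  proof -
    have "exp 1 \<le> n" using exp_le n3 by linarith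
    then show ?thesis using n0 by (simp add: ln_ge_iff)
  qed
  have aeq: "2 * n * \<rho> = a" unfolding \<rho> a_def using n0 by (simp add: power2_eq_square field_simps)
  have a0: "0 \<le> a" unfolding a_def using G ln1 n0 n3 by (intro divide_nonneg_nonneg mult_nonneg_nonneg) simp_all
  have "(1 - a) ^ m \<le> exp (- a) ^ m"
    using a1 exp_ge_add_one_self[of "- a"] unfolding a_def[symmetric] by (intro power_mono) auto
  also have "\<dots> = exp (- (a * real m))" by (simp add: exp_of_nat_mult[symmetric] algebra_simps)
  also have "\<dots> \<le> exp (- (2 * G / K))"
  proof -
    have Kp: "K > 0" using K th by (simp add: add_pos_nonneg)
    have gK: "real g \<le> K * ln n"
    proof -
      have "3 * ln n / \<theta> + 2 \<le> 3 * ln n / \<theta> + 2 * ln n" using ln1 by simp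
      also have "\<dots> = K * ln n" unfolding K by (simp add: field_simps)
      finally show ?thesis using gle by simp
    qed
    have gp: "real g > 0" using g1 by simp
    have "2 * G / K = a * n / (K * ln n)" unfolding a_def using n0 ln1 Kp n3 by (simp add: field_simps)
    also have "\<dots> \<le> a * n / real g" using a0 n0 gp gK by (intro divide_left_mono mult_nonneg_nonneg) auto
    also have "\<dots> \<le> a * (real m * real g) / real g" using a0 mg gp by (intro divide_right_mono mult_left_mono) auto
    also have "\<dots> = a * real m" using gp by simp
    finally show ?thesis by simp
  qed
  finally show ?thesis unfolding aeq .
qed

lemma arith_err:
  fixes n C \<theta> :: real and g m :: nat
  assumes n1: "1 \<le> n" and C: "C \<ge> 0" and mn: "real m \<le> n" and e: "exp (- \<theta> * real g) \<le> 1 / n ^ 3"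
  shows "real m * (C * (1 + 6 * n) * exp (- \<theta> * real g)) \<le> 7 * C / n"
proof -
  have "real m * (C * (1 + 6 * n) * exp (- \<theta> * real g)) \<le> n * (C * (7 * n) * (1 / n ^ 3))"
    using n1 C mn e by (intro mult_mono) auto
  also have "\<dots> = 7 * C / n" using n1 by (simp add: power3_eq_cube field_simps)
  finally show ?thesis .
qed


lemma irr:
  fixes \<alpha> c :: real and \<phi> :: "nat \<Rightarrow> real" and k :: nat
  assumes c: "c > 0" and \<phi>: "\<And>q. \<phi> q > 0"
    and dioph: "\<exists>Q. \<forall>q\<ge>Q. \<forall>p::int. \<bar>real q * \<alpha> - of_int p\<bar> \<ge> c * (ln (real q) * \<phi> q) / (real q)\<^sup>2"
    and k: "k > 0"
  shows "nrm (real k * \<alpha>) > 0"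
proof (rule ccontr)
  assume "\<not> nrm (real k * \<alpha>) > 0"
  then have "nrm (real k * \<alpha>) = 0" using nrm_nonneg[of "real k * \<alpha>"] by linarith
  then have e: "real k * \<alpha> = of_int (round (real k * \<alpha>))" unfolding nrm_def by simp
  obtain Q where Q: "\<forall>q\<ge>Q. \<forall>p::int. \<bar>real q * \<alpha> - of_int p\<bar> \<ge> c * (ln (real q) * \<phi> q) / (real q)\<^sup>2"
    using dioph by blast
  define q where "q = k * (Q + 2)"
  have "q \<ge> Q + 2" unfolding q_def using mult_le_mono1[of 1 k "Q+2"] k by simp
  then have qQ: "q \<ge> Q" "q \<ge> 2" by simp_all
  have "real q * \<alpha> = of_int (int (Q + 2) * round (real k * \<alpha>))"
  proof -
    have "real q * \<alpha> = real (Q + 2) * (real k * \<alpha>)" unfolding q_def by (simp add: algebra_simps)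
    also have "\<dots> = real (Q + 2) * of_int (round (real k * \<alpha>))" using e by simp
    also have "\<dots> = of_int (int (Q + 2) * round (real k * \<alpha>))" by simp
    finally show ?thesis .
  qed
  then have "\<bar>real q * \<alpha> - of_int (int (Q + 2) * round (real k * \<alpha>))\<bar> = 0" by simp
  moreover have "c * (ln (real q) * \<phi> q) / (real q)\<^sup>2 > 0"
    using qQ c \<phi>[of q] by (intro divide_pos_pos mult_pos_pos) auto
  moreover have "c * (ln (real q) * \<phi> q) / (real q)\<^sup>2 \<le> \<bar>real q * \<alpha> - of_int (int (Q + 2) * round (real k * \<alpha>))\<bar>"
    using Q qQ(1) by blast
  ultimately show False by linarith
qed

lemma delta_exists:
  fixes \<alpha> :: real and Q1 :: nat
  assumes "\<And>k::nat. k > 0 \<Longrightarrow> nrm (real k * \<alpha>) > 0"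
  shows "\<exists>\<delta>>0. \<delta> \<le> 1/2 \<and> (\<forall>k::nat. 0 < k \<longrightarrow> k < Q1 \<longrightarrow> \<delta> \<le> nrm (real k * \<alpha>))"
proof -
  define A where "A = insert (1/2) ((\<lambda>k. nrm (real k * \<alpha>)) ` {0<..<Q1})"
  have fA: "finite A" "A \<noteq> {}" unfolding A_def by auto
  have "0 < Min A" using fA assms unfolding A_def by (subst Min_gr_iff) auto
  moreover have "Min A \<le> 1/2" using fA unfolding A_def by (intro Min_le) auto
  moreover have "Min A \<le> nrm (real k * \<alpha>)" if "0 < k" "k < Q1" for k
    using fA that unfolding A_def by (intro Min_le) auto
  ultimately show ?thesis by blast
qed

lemma gap_lemma:
  fixes \<alpha> c G \<delta> \<rho> :: real and \<phi> :: "nat \<Rightarrow> real" and Q1 n k :: nat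
  assumes G: "G \<ge> 0" and Q13: "Q1 \<ge> 3"
    and bigk: "\<And>k. k \<ge> Q1 \<Longrightarrow> 2 * G \<le> c * \<phi> k \<and> (\<forall>p::int. \<bar>real k * \<alpha> - of_int p\<bar> \<ge> c * (ln (real k) * \<phi> k) / (real k)\<^sup>2)"
    and \<delta>: "\<And>k. 0 < k \<Longrightarrow> k < Q1 \<Longrightarrow> \<delta> \<le> nrm (real k * \<alpha>)"
    and \<rho>\<delta>: "2 * \<rho> < \<delta>" and \<rho>: "\<rho> = G * ln (real n) / (real n)\<^sup>2"
    and k: "0 < k" "k < n"
  shows "2 * \<rho> \<le> nrm (real k * \<alpha>)"
proof (cases "k < Q1")
  case True then show ?thesis using \<delta>[OF k(1)] \<rho>\<delta> by simp
next
  case False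
  then have kQ: "k \<ge> Q1" by simp
  have k3: "real k \<ge> 3" using kQ Q13 by simp
  have lk0: "ln (real k) / (real k)\<^sup>2 \<ge> 0" using k3 by simp
  have "2 * \<rho> = 2 * G * (ln (real n) / (real n)\<^sup>2)" unfolding \<rho> by simp
  also have "\<dots> \<le> 2 * G * (ln (real k) / (real k)\<^sup>2)"
    using G k3 k by (intro mult_left_mono ln_ratio) auto
  also have "\<dots> \<le> c * \<phi> k * (ln (real k) / (real k)\<^sup>2)"
    using bigk[OF kQ] lk0 by (intro mult_right_mono) auto
  also have "\<dots> = c * (ln (real k) * \<phi> k) / (real k)\<^sup>2" by simp
  also have "\<dots> \<le> \<bar>real k * \<alpha> - of_int (round (real k * \<alpha>))\<bar>" using bigk[OF kQ] by blast
  also have "\<dots> = nrm (real k * \<alpha>)" unfolding nrm_def ..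
  finally show ?thesis .
qed


lemma lim_aux1: "(\<lambda>n::nat. ln (real n) / (real n)\<^sup>2) \<longlonglongrightarrow> 0" by real_asymp
lemma lim_aux2: "(\<lambda>n::nat. ln (real n) / real n) \<longlonglongrightarrow> 0" by real_asymp

lemma key:
  fixes T :: "real \<Rightarrow> real" and C \<theta> \<alpha> c \<epsilon> :: real and \<phi> h r :: "nat \<Rightarrow> real" and N :: nat
  assumes T: "T \<in> measurable circle_measure circle_measure"
    and mix: "\<And>\<psi> \<phi> n. total_var \<psi> < \<infinity> \<Longrightarrow> \<phi> \<in> borel_measurable circle_measure \<Longrightarrow>
        esssup circle_measure (\<lambda>x. ereal \<bar>\<phi> x\<bar>) < \<infinity> \<Longrightarrow>
        \<bar>(\<integral>x. \<psi> x * \<phi> ((T ^^ n) x) \<partial>circle_measure)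
          - (\<integral>x. \<psi> x \<partial>circle_measure) * (\<integral>x. \<phi> x \<partial>circle_measure)\<bar>
        \<le> C * bv_norm \<psi> * linf_norm circle_measure \<phi> * exp (- \<theta> * real n)"
    and C: "C > 0" and th: "\<theta> > 0"
    and c_pos: "c > 0"
    and \<phi>_pos: "\<And>q. \<phi> q > 0"
    and \<phi>_lim: "filterlim \<phi> at_top sequentially"
    and dioph: "\<exists>Q. \<forall>q\<ge>Q. \<forall>p::int.
                  \<bar>real q * \<alpha> - of_int p\<bar> \<ge> c * (ln (real q) * \<phi> q) / (real q)\<^sup>2"
    and r_lower: "\<And>n. r n \<ge> ln (real n) * h n / (real n)\<^sup>2"
    and h_lim: "filterlim h at_top sequentially"
    and \<epsilon>: "\<epsilon> > 0"
  shows "\<exists>n\<ge>N. emeasure (circle_measure \<Otimes>\<^sub>M circle_measure) ({0..<1} \<times> {0..<1} - E_set T (rot \<alpha>) n (r n)) \<le> ennreal \<epsilon>"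
proof -
  define K where "K = 3 / \<theta> + 2"
  have Kp: "K > 0" unfolding K_def using th by (simp add: add_pos_nonneg)
  define G where "G = K * \<bar>ln (2 / \<epsilon>)\<bar> + 1"
  have Gp: "G > 0" unfolding G_def using Kp by (simp add: add_nonneg_pos)
  have expG: "exp (- (2 * G / K)) \<le> \<epsilon> / 2"
  proof -
    have "2 * G / K = 2 * \<bar>ln (2 / \<epsilon>)\<bar> + 2 / K" unfolding G_def using Kp by (simp add: field_simps)
    also have "\<dots> \<ge> ln (2 / \<epsilon>)"
    proof -
      have "0 \<le> 2 / K" using Kp by simp
      then show ?thesis using abs_ge_self[of "ln (2 / \<epsilon>)"] abs_ge_zero[of "ln (2 / \<epsilon>)"] by linarith
    qed
    finally have "- (2 * G / K) \<le> - ln (2 / \<epsilon>)" by simp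
    then have "exp (- (2 * G / K)) \<le> exp (- ln (2 / \<epsilon>))" by simp
    also have "\<dots> = \<epsilon> / 2" using \<epsilon> by (simp add: exp_minus)
    finally show ?thesis .
  qed
  obtain Q where Q: "\<forall>q\<ge>Q. \<forall>p::int. \<bar>real q * \<alpha> - of_int p\<bar> \<ge> c * (ln (real q) * \<phi> q) / (real q)\<^sup>2"
    using dioph by blast
  have "eventually (\<lambda>k. 2 * G / c \<le> \<phi> k) sequentially"
    using \<phi>_lim by (simp add: filterlim_at_top)
  then obtain Q0 where Q0: "\<And>k. k \<ge> Q0 \<Longrightarrow> 2 * G / c \<le> \<phi> k" by (auto simp: eventually_sequentially)
  define Q1 where "Q1 = max Q0 (max Q 3)"
  have Q13: "Q1 \<ge> 3" unfolding Q1_def by simp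
  have bigk: "2 * G \<le> c * \<phi> k \<and> (\<forall>p::int. \<bar>real k * \<alpha> - of_int p\<bar> \<ge> c * (ln (real k) * \<phi> k) / (real k)\<^sup>2)"
    if "k \<ge> Q1" for k
  proof
    have "2 * G / c \<le> \<phi> k" using Q0 that unfolding Q1_def by simp
    then show "2 * G \<le> c * \<phi> k" using c_pos by (simp add: field_simps)
    show "\<forall>p::int. \<bar>real k * \<alpha> - of_int p\<bar> \<ge> c * (ln (real k) * \<phi> k) / (real k)\<^sup>2"
      using Q that unfolding Q1_def by simp
  qed
  obtain \<delta> where \<delta>0: "\<delta> > 0" and \<delta>h: "\<delta> \<le> 1/2"
      and \<delta>: "\<And>k::nat. 0 < k \<Longrightarrow> k < Q1 \<Longrightarrow> \<delta> \<le> nrm (real k * \<alpha>)"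
    using delta_exists[OF irr[OF c_pos \<phi>_pos dioph], of Q1] by blast
  have ev1: "eventually (\<lambda>n. G * (ln (real n) / (real n)\<^sup>2) < \<delta> / 2) sequentially"
    by (rule order_tendstoD(2)[OF tendsto_mult_right_zero[OF lim_aux1]]) (use \<delta>0 in simp)
  have ev2: "eventually (\<lambda>n. 2 * G * (ln (real n) / real n) < 1) sequentially"
    by (rule order_tendstoD(2)[OF tendsto_mult_right_zero[OF lim_aux2]]) simp
  have ev3: "eventually (\<lambda>n. 14 * C / \<epsilon> \<le> real n) sequentially"
    using filterlim_real_sequentially by (simp add: filterlim_at_top)
  have ev4: "eventually (\<lambda>n. G \<le> h n) sequentially"
    using h_lim by (simp add: filterlim_at_top)
  have ev5: "eventually (\<lambda>n. max N Q1 \<le> n) sequentially" by (rule eventually_ge_at_top)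
  have "eventually (\<lambda>n. (G * (ln (real n) / (real n)\<^sup>2) < \<delta> / 2) \<and> (2 * G * (ln (real n) / real n) < 1) \<and>
      (14 * C / \<epsilon> \<le> real n) \<and> (G \<le> h n) \<and> (max N Q1 \<le> n)) sequentially"
    using ev1 ev2 ev3 ev4 ev5 by (intro eventually_conj)
  then obtain n where nprops: "G * (ln (real n) / (real n)\<^sup>2) < \<delta> / 2" "2 * G * (ln (real n) / real n) < 1"
      "14 * C / \<epsilon> \<le> real n" "G \<le> h n" "max N Q1 \<le> n"
    by (auto simp: eventually_sequentially)
  have nN: "n \<ge> N" and nQ: "n \<ge> Q1" using nprops(5) by auto
  have n3: "real n \<ge> 3" using nQ Q13 by simp
  have n0: "real n > 0" using n3 by simp
  have ln1: "ln (real n) \<ge> 1"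
  proof -
    have "exp 1 \<le> real n" using exp_le n3 by linarith
    then show ?thesis using n0 by (simp add: ln_ge_iff)
  qed
  define \<rho> where "\<rho> = G * ln (real n) / (real n)\<^sup>2"
  have \<rho>0: "\<rho> > 0" unfolding \<rho>_def using Gp ln1 n0 n3 by (intro divide_pos_pos mult_pos_pos) auto
  have \<rho>\<delta>: "2 * \<rho> < \<delta>"
  proof -
    have "\<rho> = G * (ln (real n) / (real n)\<^sup>2)" unfolding \<rho>_def by simp
    then show ?thesis using nprops(1) by linarith
  qed
  have \<rho>h: "\<rho> < 1/2" using \<rho>\<delta> \<delta>h by simp
  have \<rho>r: "\<rho> \<le> r n"
  proof -
    have "\<rho> = ln (real n) * G / (real n)\<^sup>2" unfolding \<rho>_def by simp
    also have "\<dots> \<le> ln (real n) * h n / (real n)\<^sup>2"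
      using nprops(4) ln1 by (intro divide_right_mono mult_left_mono) auto
    also have "\<dots> \<le> r n" by (rule r_lower)
    finally show ?thesis .
  qed
  define g where "g = nat \<lceil>3 * ln (real n) / \<theta>\<rceil> + 1"
  have g1: "g \<ge> 1" unfolding g_def by simp
  have x0: "3 * ln (real n) / \<theta> \<ge> 0" using ln1 th by simp
  have gle: "real g \<le> 3 * ln (real n) / \<theta> + 2"
  proof -
    have "real (nat \<lceil>3 * ln (real n) / \<theta>\<rceil>) = of_int \<lceil>3 * ln (real n) / \<theta>\<rceil>" using x0 by simp
    also have "\<dots> \<le> 3 * ln (real n) / \<theta> + 1" by linarith
    finally show ?thesis unfolding g_def by simp
  qed
  have gge: "real g \<ge> 3 * ln (real n) / \<theta>"
  proof -
    have "3 * ln (real n) / \<theta> \<le> of_int \<lceil>3 * ln (real n) / \<theta>\<rceil>" by (rule le_of_int_ceiling)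
    also have "\<dots> = real (nat \<lceil>3 * ln (real n) / \<theta>\<rceil>)" using x0 by simp
    finally show ?thesis unfolding g_def by simp
  qed
  define m where "m = (n - 1) div g + 1"
  have lg: "l * g < n" if "l < m" for l
  proof -
    have "l \<le> (n - 1) div g" using that unfolding m_def by simp
    then have "l * g \<le> (n - 1) div g * g" by (rule mult_le_mono1)
    also have "\<dots> \<le> n - 1" by (rule div_times_less_eq_dividend)
    finally show ?thesis using n3 by linarith
  qed
  have mg: "m * g \<ge> n"
  proof -
    have a: "(n - 1) div g * g + (n - 1) mod g = n - 1" by (rule div_mult_mod_eq)
    have b: "(n - 1) mod g < g" using g1 by simp
    have c: "m * g = (n - 1) div g * g + g" unfolding m_def by (simp add: add_mult_distrib)
    show ?thesis using a b c by linarith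
  qed
  have mn: "m \<le> n"
  proof -
    have "(n - 1) div g \<le> n - 1" by (rule div_le_dividend)
    then show ?thesis unfolding m_def using n3 by linarith
  qed
  have expg: "exp (- \<theta> * real g) \<le> 1 / real n ^ 3"
  proof -
    have "3 * ln (real n) \<le> \<theta> * real g" using gge th by (simp add: field_simps)
    then have "exp (- \<theta> * real g) \<le> exp (- (3 * ln (real n)))" by simp
    also have "\<dots> = 1 / real n ^ 3"
      using n0 by (simp add: exp_minus exp_of_nat_mult[of 3, simplified] inverse_eq_divide)
    finally show ?thesis .
  qed
  have gap: "2 * \<rho> \<le> nrm (real k * \<alpha>)" if "0 < k" "k < n" for k :: nat
    by (rule gap_lemma[OF _ Q13 bigk \<delta> \<rho>\<delta> \<rho>_def that]) (use Gp in auto)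
  have pb: "emeasure (circle_measure \<Otimes>\<^sub>M circle_measure) ({0..<1} \<times> {0..<1} - E_set T (rot \<alpha>) n (r n))
     \<le> ennreal ((1 - 2 * real n * \<rho>) ^ m + real m * (C * (1 + 6 * real n) * exp (- \<theta> * real g)))"
    by (rule prod_bound[OF T mix less_imp_le[OF C] \<rho>0 \<rho>h \<rho>r lg gap])
  have b1: "(1 - 2 * real n * \<rho>) ^ m \<le> exp (- (2 * G / K))"
  proof -
    have mg': "real m * real g \<ge> real n" using mg by (metis of_nat_le_iff of_nat_mult)
    have a1: "2 * G * ln (real n) / real n \<le> 1" using nprops(2) by simp
    show ?thesis by (rule arith_main[OF n3 Gp th K_def g1 gle mg' a1 \<rho>_def])
  qed
  have b2: "real m * (C * (1 + 6 * real n) * exp (- \<theta> * real g)) \<le> 7 * C / real n"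
  proof -
    have "1 \<le> real n" using n3 by simp
    moreover have "real m \<le> real n" using mn by simp
    ultimately show ?thesis by (rule arith_err[OF _ less_imp_le[OF C] _ expg])
  qed
  have b3: "7 * C / real n \<le> \<epsilon> / 2"
  proof -
    have "14 * C \<le> \<epsilon> * real n" using nprops(3) \<epsilon> by (simp add: field_simps)
    then show ?thesis using n0 by (simp add: field_simps)
  qed
  have "(1 - 2 * real n * \<rho>) ^ m + real m * (C * (1 + 6 * real n) * exp (- \<theta> * real g)) \<le> \<epsilon>"
    using b1 b2 b3 expG by linarith
  then have "emeasure (circle_measure \<Otimes>\<^sub>M circle_measure) ({0..<1} \<times> {0..<1} - E_set T (rot \<alpha>) n (r n)) \<le> ennreal \<epsilon>"
    by (rule order_trans[OF pb ennreal_leI])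
  then show ?thesis using nN by blast
qed


theorem mainTheorem11:
  fixes T1 :: "real \<Rightarrow> real" and \<alpha> c :: real
    and \<phi> h r :: "nat \<Rightarrow> real"
  assumes T1_mp: "measure_preserving_map circle_measure T1"
    and T1_mix: "exp_mixing_BV_Linf T1"
    and c_pos: "c > 0"
    and \<phi>_pos: "\<And>q. \<phi> q > 0"
    and \<phi>_lim: "filterlim \<phi> at_top sequentially"
    and dioph: "\<exists>Q. \<forall>q\<ge>Q. \<forall>p::int.
                  \<bar>real q * \<alpha> - of_int p\<bar> \<ge> c * (ln (real q) * \<phi> q) / (real q)\<^sup>2"
    and r_pos: "\<And>n. r n > 0"
    and r_lower: "\<And>n. r n \<ge> ln (real n) * h n / (real n)\<^sup>2"
    and h_lim: "filterlim h at_top sequentially"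
    and h\<phi>: "(\<lambda>n. h n / \<phi> n) \<longlonglongrightarrow> 0"
  shows "emeasure (circle_measure \<Otimes>\<^sub>M circle_measure)
           (\<Inter>N. \<Union>n\<in>{N..}. E_set T1 (rot \<alpha>) n (r n)) = 1"
proof -
  let ?M = "circle_measure \<Otimes>\<^sub>M circle_measure"
  interpret Q: prob_space ?M by (rule prob_space_pair[OF prob_circle prob_circle])
  have T: "T1 \<in> measurable circle_measure circle_measure"
    using T1_mp unfolding measure_preserving_map_def by blast
  obtain C \<theta> where C: "C > 0" and th: "\<theta> > 0" and mixall: "\<forall>\<psi> \<phi> (n::nat). total_var \<psi> < \<infinity> \<and> \<phi> \<in> borel_measurable circle_measure \<and>
        esssup circle_measure (\<lambda>x. ereal \<bar>\<phi> x\<bar>) < \<infinity> \<longrightarrow>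
        \<bar>(\<integral>x. \<psi> x * \<phi> ((T1 ^^ n) x) \<partial>circle_measure)
          - (\<integral>x. \<psi> x \<partial>circle_measure) * (\<integral>x. \<phi> x \<partial>circle_measure)\<bar>
        \<le> C * bv_norm \<psi> * linf_norm circle_measure \<phi> * exp (- \<theta> * real n)"
    using T1_mix unfolding exp_mixing_BV_Linf_def by blast
  have mix: "\<And>\<psi> \<phi> n. total_var \<psi> < \<infinity> \<Longrightarrow> \<phi> \<in> borel_measurable circle_measure \<Longrightarrow>
        esssup circle_measure (\<lambda>x. ereal \<bar>\<phi> x\<bar>) < \<infinity> \<Longrightarrow>
        \<bar>(\<integral>x. \<psi> x * \<phi> ((T1 ^^ n) x) \<partial>circle_measure)
          - (\<integral>x. \<psi> x \<partial>circle_measure) * (\<integral>x. \<phi> x \<partial>circle_measure)\<bar>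
        \<le> C * bv_norm \<psi> * linf_norm circle_measure \<phi> * exp (- \<theta> * real n)"
    using mixall by blast
  define E where "E n = E_set T1 (rot \<alpha>) n (r n)" for n
  have Em: "E n \<in> sets ?M" for n unfolding E_def by (rule E_meas[OF T])
  define U where "U N = (\<Union>n\<in>{N..}. E n)" for N
  have Um: "U N \<in> sets ?M" for N unfolding U_def using Em by (intro sets.countable_UN) auto
  have null: "emeasure ?M (space ?M - U N) = 0" for N
  proof -
    have "emeasure ?M (space ?M - U N) \<le> 0 + ennreal \<epsilon>" if \<epsilon>_pos: "\<epsilon> > 0" for \<epsilon>
    proof -
      obtain n where n: "n \<ge> N" and b: "emeasure ?M ({0..<1} \<times> {0..<1} - E n) \<le> ennreal \<epsilon>"
        using key[OF T mix C th c_pos \<phi>_pos \<phi>_lim dioph r_lower h_lim \<epsilon>_pos, of N] unfolding E_def by blast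
      have "space ?M - U N \<subseteq> space ?M - E n" unfolding U_def using n by auto
      then have "emeasure ?M (space ?M - U N) \<le> emeasure ?M (space ?M - E n)"
        by (intro emeasure_mono sets.Diff sets.top Em)
      then show ?thesis using b unfolding space_pair_circle by simp
    qed
    then have "emeasure ?M (space ?M - U N) \<le> 0" by (rule ennreal_le_epsilon)
    then show ?thesis by simp
  qed
  define I where "I = (\<Inter>N. U N)"
  have Im: "I \<in> sets ?M" unfolding I_def using Um by (intro sets.countable_INT) auto
  have eq: "space ?M - I = (\<Union>N. space ?M - U N)" unfolding I_def by auto
  have "emeasure ?M (\<Union>N. space ?M - U N) = 0"
    by (rule emeasure_UN_eq_0[OF null]) (use Um in \<open>auto intro: sets.Diff sets.top\<close>)
  then have "emeasure ?M (space ?M - I) = 0" unfolding eq .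
  then have "Q.prob (space ?M - I) = 0" by (simp add: Q.emeasure_eq_measure)
  then have "Q.prob I = 1" using Q.prob_compl[OF Im] by simp
  then have "emeasure ?M I = 1" by (simp add: Q.emeasure_eq_measure)
  then show ?thesis unfolding I_def U_def E_def .
qed

end
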